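(* Let $k\ge2$, $q\in\{0,\dots,k-2\}$, $1\le\ell_1,\ell_2\le k-1$ and $\alpha\in\mathfrak{S}_k^0$ be fixed. Then $$\#\big\{\varphi\in\mathfrak{S}_k^0:\ \big|c^{-1}\varphi^{-1}\alpha^{-1}c\,(\ell_2\ k-1)(1\ \ell_1)\,\varphi\big|=q\big\}\le\frac{k^{4q}}{(2q)!}.$$
   Context: $\mathfrak{S}_k$ is the symmetric group on $\{1,\dots,k\}$, products are compositions (applied right to left), and $\mathfrak{S}_k^0:=\{\varphi\in\mathfrak{S}_k:\varphi(1)=1,\ \varphi(k)=k\}$. $c$ is the cycle $(1\,2\,\cdots\,k)$, i.e. $c(i)=i+1$ for $i<k$ and $c(k)=1$. For $x\ne y$, $(x\,y)$ is the transposition exchanging $x,y$; $(x\,x)$ denotes the identity. For $\sigma\in\mathfrak{S}_k$, $|\sigma|$ is the minimal number of transpositions needed to write $\sigma$ as a product of transpositions. *)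

theory Defs
  imports "HOL-Combinatorics.Combinatorics" Complex_Main
begin

text \<open>Permutations of {1..k} are functions nat => nat that permute {1..k}
  (identity outside). Composition is function composition, applied right to left.\<close>

definition Sk0 :: "nat \<Rightarrow> (nat \<Rightarrow> nat) set" where
  "Sk0 k = {\<phi>. \<phi> permutes {1..k} \<and> \<phi> 1 = 1 \<and> \<phi> k = k}"

definition cyc :: "nat \<Rightarrow> nat \<Rightarrow> nat" where
  "cyc k i = (if 1 \<le> i \<and> i < k then i + 1 else if i = k then 1 else i)"

definition transp_prod :: "(nat \<times> nat) list \<Rightarrow> nat \<Rightarrow> nat" where
  "transp_prod ts = foldr (\<lambda>(x, y) f. transpose x y \<circ> f) ts id"

definition tlen :: "nat \<Rightarrow> (nat \<Rightarrow> nat) \<Rightarrow> nat" where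
  "tlen k \<sigma> = (LEAST n. \<exists>ts. length ts = n \<and>
      (\<forall>(x, y) \<in> set ts. x \<in> {1..k} \<and> y \<in> {1..k} \<and> x \<noteq> y) \<and>
      \<sigma> = transp_prod ts)"

end

theory Submission
  imports Defs
begin

lemma tp_cons: "transp_prod ((a,b)#ts) = transpose a b \<circ> transp_prod ts"
  by (simp add: transp_prod_def)

lemma tp_moves: "{x. transp_prod ts x \<noteq> x} \<subseteq> set (concat (map (\<lambda>(a,b). [a,b]) ts))"
proof (induction ts)
  case Nil then show ?case by (simp add: transp_prod_def)
next
  case (Cons p ts)
  obtain a b where p: "p = (a,b)" by force
  show ?case
  proof
    fix x assume "x \<in> {x. transp_prod (p#ts) x \<noteq> x}"
    then have "transpose a b (transp_prod ts x) \<noteq> x" by (simp add: p tp_cons)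
    then show "x \<in> set (concat (map (\<lambda>(a,b). [a,b]) (p#ts)))"
      using Cons.IH by (cases "transp_prod ts x = x") (auto simp: p transpose_def)
  qed
qed

lemma tp_moves_card: "card {x. transp_prod ts x \<noteq> x} \<le> 2 * length ts"
proof -
  have "card {x. transp_prod ts x \<noteq> x} \<le> card (set (concat (map (\<lambda>(a,b). [a,b]) ts)))"
    by (rule card_mono[OF finite_set tp_moves])
  also have "\<dots> \<le> length (concat (map (\<lambda>(a,b). [a,b]) ts))" by (rule card_length)
  also have "\<dots> = 2 * length ts" by (induction ts) auto
  finally show ?thesis .
qed

lemma tp_exists:
  assumes "p permutes {1..k}"
  shows "\<exists>ts. (\<forall>(x, y) \<in> set ts. x \<in> {1..k} \<and> y \<in> {1..k} \<and> x \<noteq> y) \<and> p = transp_prod ts"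
  using assms finite_atLeastAtMost
proof (induction rule: permutes_induct)
  case id
  then show ?case by (intro exI[of _ "[]"]) (simp add: transp_prod_def)
next
  case (swap a b p)
  then obtain ts where "(\<forall>(x, y) \<in> set ts. x \<in> {1..k} \<and> y \<in> {1..k} \<and> x \<noteq> y) \<and> p = transp_prod ts"
    by blast
  with swap show ?case by (intro exI[of _ "(a,b)#ts"]) (auto simp: tp_cons)
qed

lemma tlen_ex:
  assumes "p permutes {1..k}"
  shows "\<exists>ts. length ts = tlen k p \<and> (\<forall>(x, y) \<in> set ts. x \<in> {1..k} \<and> y \<in> {1..k} \<and> x \<noteq> y) \<and> p = transp_prod ts"
proof -
  from tp_exists[OF assms] obtain ts where
    "(\<forall>(x, y) \<in> set ts. x \<in> {1..k} \<and> y \<in> {1..k} \<and> x \<noteq> y) \<and> p = transp_prod ts" by blast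
  then have "\<exists>n. \<exists>ts. length ts = n \<and> (\<forall>(x, y) \<in> set ts. x \<in> {1..k} \<and> y \<in> {1..k} \<and> x \<noteq> y) \<and> p = transp_prod ts"
    by blast
  from LeastI_ex[OF this] show ?thesis unfolding tlen_def .
qed

fun dec :: "(nat \<Rightarrow> nat) \<Rightarrow> (nat \<times> nat) set \<Rightarrow> nat \<Rightarrow> nat" where
  "dec b P 0 = 1"
| "dec b P (Suc y) = (if y = 0 then 1 else if (\<exists>v. (Suc y, v) \<in> P) then (SOME v. (Suc y, v) \<in> P) else b (dec b P y))"

lemma dec_correct:
  assumes "\<phi> 1 = 1" "\<And>x v. (x, v) \<in> P \<Longrightarrow> v = \<phi> x"
    and "\<And>y. 1 \<le> y \<Longrightarrow> y < k \<Longrightarrow> (Suc y, \<phi> (Suc y)) \<notin> P \<Longrightarrow> \<phi> (Suc y) = b (\<phi> y)"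
  shows "1 \<le> y \<Longrightarrow> y \<le> k \<Longrightarrow> dec b P y = \<phi> y"
proof (induction y)
  case 0 then show ?case by simp
next
  case (Suc y)
  show ?case
  proof (cases "y = 0")
    case True then show ?thesis using assms(1) by simp
  next
    case False
    show ?thesis
    proof (cases "\<exists>v. (Suc y, v) \<in> P")
      case True
      then have "(SOME v. (Suc y, v) \<in> P) = \<phi> (Suc y)"
        using assms(2) by (metis someI_ex)
      then show ?thesis using True False by simp
    next
      case nt: False
      then have "(Suc y, \<phi> (Suc y)) \<notin> P" by blast
      then have "\<phi> (Suc y) = b (\<phi> y)" using assms(3)[of y] False Suc.prems by simp
      then show ?thesis using nt False Suc by simp
    qed
  qed
qed

lemma pow_fact_mono:
  assumes "j \<le> J" "J \<le> N"
  shows "real N ^ j / fact j \<le> real N ^ J / fact J"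
  using assms
proof (induction J)
  case 0 then show ?case by simp
next
  case (Suc J)
  show ?case
  proof (cases "j = Suc J")
    case True then show ?thesis by simp
  next
    case False
    then have "real N ^ j / fact j \<le> real N ^ J / fact J" using Suc by simp
    also have "\<dots> \<le> real N ^ Suc J / fact (Suc J)"
    proof -
      have f: "(fact (Suc J)::real) = real (Suc J) * fact J" by simp
      have "real N ^ J / fact J = real N ^ J * (Suc J) / fact (Suc J)"
        unfolding f by (metis (no_types) mult.commute nonzero_mult_divide_mult_cancel_left of_nat_0 of_nat_eq_iff nat.distinct(1) times_divide_eq_right mult_divide_mult_cancel_left_if)
      also have "\<dots> \<le> real N ^ J * N / fact (Suc J)"
        using Suc.prems by (intro divide_right_mono mult_left_mono) auto
      finally show ?thesis by (simp add: mult.commute)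
    qed
    finally show ?thesis .
  qed
qed


lemma cyc_permutes:
  assumes "k \<ge> 2"
  shows "cyc k permutes {1..k}"
proof (rule bij_imp_permutes)
  show "bij_betw (cyc k) {1..k} {1..k}"
    using assms by (intro bij_betw_byWitness[where f'="\<lambda>i. if 2 \<le> i \<and> i \<le> k then i - 1 else if i = 1 then k else i"])
       (auto simp: cyc_def)
  show "\<And>x. x \<notin> {1..k} \<Longrightarrow> cyc k x = x" using assms by (auto simp: cyc_def)
qed

theorem lemma6:
  fixes k q l1 l2 :: nat and \<alpha> :: "nat \<Rightarrow> nat"
  assumes "k \<ge> 2" and "q \<le> k - 2"
    and "1 \<le> l1" "l1 \<le> k - 1" and "1 \<le> l2" "l2 \<le> k - 1"
    and "\<alpha> \<in> Sk0 k"
  shows "real (card {\<phi> \<in> Sk0 k.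
            tlen k (inv (cyc k) \<circ> inv \<phi> \<circ> inv \<alpha> \<circ> cyc k \<circ> transpose l2 (k - 1)
                    \<circ> transpose 1 l1 \<circ> \<phi>) = q})
         \<le> real k ^ (4 * q) / fact (2 * q)"
proof -
  define b where "b = inv \<alpha> \<circ> cyc k \<circ> transpose l2 (k - 1) \<circ> transpose 1 l1"
  define \<sigma> where "\<sigma> \<phi> = inv (cyc k) \<circ> inv \<phi> \<circ> inv \<alpha> \<circ> cyc k \<circ> transpose l2 (k - 1)
                    \<circ> transpose 1 l1 \<circ> \<phi>" for \<phi> :: "nat \<Rightarrow> nat"
  define A where "A = {\<phi> \<in> Sk0 k. tlen k (\<sigma> \<phi>) = q}"
  define j where "j = min (2 * q) (k - 1)"
  define G where "G \<phi> = (\<lambda>x. (x, \<phi> x)) ` {2..k}" for \<phi> :: "nat \<Rightarrow> nat"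
  define F where "F \<phi> = (\<lambda>y. (Suc y, \<phi> (Suc y))) ` {y \<in> {1..k-1}. \<sigma> \<phi> y \<noteq> y}" for \<phi> :: "nat \<Rightarrow> nat"
  define enc where "enc \<phi> = (SOME P. F \<phi> \<subseteq> P \<and> P \<subseteq> G \<phi> \<and> card P = j)" for \<phi>
  define dd where "dd P = (\<lambda>y. if y \<in> {1..k} then dec b P y else y)" for P
  define B where "B = {P. P \<subseteq> {1..k} \<times> {1..k} \<and> card P = j}"
  have cp: "cyc k permutes {1..k}" using cyc_permutes assms(1) .
  have ap: "\<alpha> permutes {1..k}" using assms(7) by (simp add: Sk0_def)
  have tp: "transpose l2 (k - 1) \<circ> transpose 1 l1 permutes {1..k}"
    using assms by (intro permutes_compose permutes_swap_id) auto
  have bp: "b permutes {1..k}" unfolding b_def using tp cp ap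
    by (metis comp_assoc permutes_compose permutes_inv)
  have key: "\<phi> (Suc y) = b (\<phi> y)" if "\<phi> \<in> Sk0 k" "1 \<le> y" "y < k" "\<sigma> \<phi> y = y" for \<phi> y
  proof -
    have php: "\<phi> permutes {1..k}" using that(1) by (simp add: Sk0_def)
    have "inv (cyc k) (inv \<phi> (b (\<phi> y))) = y" using that(4) by (simp add: \<sigma>_def b_def)
    then have "cyc k (inv (cyc k) (inv \<phi> (b (\<phi> y)))) = cyc k y" by simp
    then have "inv \<phi> (b (\<phi> y)) = Suc y" using permutes_inverses(1)[OF cp] that(2,3)
      by (simp add: cyc_def)
    then have "\<phi> (inv \<phi> (b (\<phi> y))) = \<phi> (Suc y)" by simp
    then show ?thesis using permutes_inverses(1)[OF php] by simp
  qed
  have enc: "F \<phi> \<subseteq> enc \<phi> \<and> enc \<phi> \<subseteq> G \<phi> \<and> card (enc \<phi>) = j" if "\<phi> \<in> A" for \<phi>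
  proof -
    have S: "\<phi> \<in> Sk0 k" and tq: "tlen k (\<sigma> \<phi>) = q" using that by (auto simp: A_def)
    have php: "\<phi> permutes {1..k}" using S by (simp add: Sk0_def)
    have "\<sigma> \<phi> permutes {1..k}" unfolding \<sigma>_def using php cp ap tp
      by (metis comp_assoc permutes_compose permutes_inv)
    from tlen_ex[OF this] obtain ts where ts: "length ts = q" "\<sigma> \<phi> = transp_prod ts"
      using tq by auto
    have fin: "finite {x. \<sigma> \<phi> x \<noteq> x}"
      using ts(2) tp_moves[of ts] finite_subset by fastforce
    have "card (F \<phi>) \<le> card {y \<in> {1..k-1}. \<sigma> \<phi> y \<noteq> y}" unfolding F_def by (rule card_image_le) simp
    also have "\<dots> \<le> card {x. \<sigma> \<phi> x \<noteq> x}" by (rule card_mono[OF fin]) auto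
    also have "\<dots> \<le> 2 * q" using tp_moves_card[of ts] ts by simp
    finally have c1: "card (F \<phi>) \<le> 2 * q" .
    have FG: "F \<phi> \<subseteq> G \<phi>" unfolding F_def G_def by auto
    have cG: "card (G \<phi>) = k - 1" unfolding G_def
      by (subst card_image) (auto simp: inj_on_def)
    have finG: "finite (G \<phi>)" unfolding G_def by simp
    have c2: "card (F \<phi>) \<le> j" using c1 card_mono[OF finG FG] cG by (simp add: j_def)
    have "j - card (F \<phi>) \<le> card (G \<phi> - F \<phi>)"
      using card_Diff_subset[OF finite_subset[OF FG finG] FG] cG j_def by simp
    then obtain T where T: "T \<subseteq> G \<phi> - F \<phi>" "card T = j - card (F \<phi>)" "finite T"
      by (rule obtain_subset_with_card_n)
    have "F \<phi> \<subseteq> F \<phi> \<union> T \<and> F \<phi> \<union> T \<subseteq> G \<phi> \<and> card (F \<phi> \<union> T) = j"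
      using T c2 FG finite_subset[OF FG finG]
      by (subst card_Un_disjoint) auto
    then show ?thesis unfolding enc_def by (rule someI)
  qed
  have dec_enc: "dd (enc \<phi>) = \<phi>" if "\<phi> \<in> A" for \<phi>
  proof
    fix y
    have S: "\<phi> \<in> Sk0 k" using that by (auto simp: A_def)
    have php: "\<phi> permutes {1..k}" using S by (simp add: Sk0_def)
    have e: "F \<phi> \<subseteq> enc \<phi>" "enc \<phi> \<subseteq> G \<phi>" using enc[OF that] by auto
    show "dd (enc \<phi>) y = \<phi> y"
    proof (cases "y \<in> {1..k}")
      case True
      have "dec b (enc \<phi>) y = \<phi> y"
      proof (rule dec_correct[where k=k])
        show "\<phi> 1 = 1" using S by (simp add: Sk0_def)
        show "\<And>x v. (x, v) \<in> enc \<phi> \<Longrightarrow> v = \<phi> x" using e(2) by (auto simp: G_def)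
        show "\<phi> (Suc y) = b (\<phi> y)" if "1 \<le> y" "y < k" "(Suc y, \<phi> (Suc y)) \<notin> enc \<phi>" for y
        proof -
          have "\<sigma> \<phi> y = y"
          proof (rule ccontr)
            assume "\<sigma> \<phi> y \<noteq> y"
            then have "y \<in> {y \<in> {1..k-1}. \<sigma> \<phi> y \<noteq> y}" using that by auto
            then have "(Suc y, \<phi> (Suc y)) \<in> F \<phi>" unfolding F_def by blast
            then show False using that e(1) by blast
          qed
          then show ?thesis using key[OF S] that by simp
        qed
      qed (use True in auto)
      then show ?thesis using True by (simp add: dd_def)
    next
      case False
      have "dd (enc \<phi>) y = y" unfolding dd_def using False by (simp only: if_False)
      then show ?thesis using permutes_not_in[OF php False] by simp
    qed
  qed
  have finB: "finite B" unfolding B_def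
    by (rule finite_subset[of _ "Pow ({1..k} \<times> {1..k})"]) auto
  have "card A \<le> card B"
  proof (rule card_inj_on_le[OF _ _ finB])
    show "inj_on enc A" by (rule inj_on_inverseI[where g=dd]) (rule dec_enc)
    show "enc ` A \<subseteq> B"
    proof
      fix P assume "P \<in> enc ` A"
      then obtain \<phi> where ph: "\<phi> \<in> A" "P = enc \<phi>" by blast
      have php: "\<phi> permutes {1..k}" using ph(1) by (simp add: A_def Sk0_def)
      have "G \<phi> \<subseteq> {1..k} \<times> {1..k}"
      proof
        fix z assume "z \<in> G \<phi>"
        then obtain x where x: "x \<in> {2..k}" "z = (x, \<phi> x)" unfolding G_def by blast
        then have "x \<in> {1..k}" by simp
        then have "\<phi> x \<in> {1..k}" using permutes_in_image[OF php] by simp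
        then show "z \<in> {1..k} \<times> {1..k}" using x \<open>x \<in> {1..k}\<close> by simp
      qed
      moreover have "P \<subseteq> G \<phi>" "card P = j" using enc[OF ph(1)] ph(2) by auto
      ultimately show "P \<in> B" unfolding B_def by auto
    qed
  qed
  also have "card B = (k * k) choose j" unfolding B_def
    by (subst n_subsets) auto
  finally have c: "real (card A) \<le> real ((k * k) choose j)" by simp
  have "((k * k) choose j) * fact j \<le> (k * k) ^ j" by (rule binomial_fact_pow)
  then have "real ((k * k) choose j) * fact j \<le> real (k * k) ^ j"
    by (metis of_nat_fact of_nat_le_iff of_nat_mult of_nat_power)
  then have "real ((k * k) choose j) \<le> real (k * k) ^ j / fact j"
    by (simp add: field_simps)
  also have "\<dots> \<le> real (k * k) ^ (2 * q) / fact (2 * q)"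
  proof (rule pow_fact_mono)
    show "j \<le> 2 * q" by (simp add: j_def)
    have "2 * q \<le> 2 * k" using assms by simp
    also have "\<dots> \<le> k * k" using assms(1) by simp
    finally show "2 * q \<le> k * k" .
  qed
  also have "\<dots> = real k ^ (4 * q) / fact (2 * q)"
  proof -
    have "real (k * k) ^ (2 * q) = real k ^ (2 * q) * real k ^ (2 * q)"
      by (simp add: power_mult_distrib)
    also have "\<dots> = real k ^ (4 * q)" by (simp flip: power_add)
    finally show ?thesis by simp
  qed
  finally show ?thesis using c unfolding A_def \<sigma>_def by simp
qed

end
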